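(* Let $\mu$ be an admissible even probability measure on $\mathbb{R}$. Then, for any $\delta\in\left(0,\tfrac12\right)$ there exist $c(\mu,\delta)>0$ and $n_0(\mu,\delta)\in\mathbb{N}$ such that $$\varrho_1(\mu_n,\delta)\ge\left(1-\frac{c(\mu,\delta)}{\sqrt n}\right)\mathbb{E}_\mu(\Lambda_\mu^{\ast})$$ for all $n\ge n_0(\mu,\delta)$.
   Context: Let $X$ have distribution $\mu$. Write $x^{\ast}=\sup\{x\in\mathbb{R}:\mu([x,\infty))>0\}$ (possibly $+\infty$), $\Lambda_\mu(t)=\ln\int e^{tx}\,d\mu(x)$, $\Lambda_\mu^{\ast}(x)=\sup_{t\in\mathbb{R}}\{tx-\Lambda_\mu(t)\}$, and $\mathbb{E}_\mu(\Lambda_\mu^\ast)=\int\Lambda_\mu^\ast\,d\mu$. The measure $\mu$ is admissible if: $\mathrm{Var}(X)>0$; there is $r>0$ with $\mathbb{E}e^{tX}<\infty$ for $t\in(-r,r)$; if $x^{\ast}<\infty$ then $\mu(\{x^{\ast}\})=0$; and one of: (1) $x^{\ast}<\infty$, (2) $x^{\ast}=+\infty$ and $\{\Lambda_\mu<\infty\}=\mathbb{R}$, (3) $x^{\ast}=+\infty$, $\{\Lambda_\mu<\infty\}$ bounded and $\mu$ log-concave. Let $\mu_n=\mu^{\otimes n}$. For $N>n$ let $\vec X_1,\dots,\vec X_N$ be i.i.d. random vectors in $\mathbb{R}^n$ with distribution $\mu_n$ (joint law $\mu_n^N$) and $K_N=\mathrm{conv}\{\vec X_1,\dots,\vec X_N\}$.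 For $\delta\in(0,\tfrac12)$, $\varrho_1(\mu_n,\delta)=\sup\{\varrho_1:\sup\{\mathbb{E}_{\mu_n^N}[\mu_n(K_N)]:N\le\exp(\varrho_1 n)\}\le\delta\}$. *)

theory Defs
  imports "HOL-Probability.Probability"
begin

definition xstar :: "real measure \<Rightarrow> ereal" where
  "xstar \<mu> = Sup {ereal x | x. measure \<mu> {x..} > 0}"

definition Lambda :: "real measure \<Rightarrow> real \<Rightarrow> ereal" where
  "Lambda \<mu> t = (if integrable \<mu> (\<lambda>x. exp (t * x))
                   then ereal (ln (\<integral>x. exp (t * x) \<partial>\<mu>)) else \<infinity>)"

definition Lambda_star :: "real measure \<Rightarrow> real \<Rightarrow> ereal" where
  "Lambda_star \<mu> x = (SUP t. ereal (t * x) - Lambda \<mu> t)"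

definition E_Lambda_star :: "real measure \<Rightarrow> ereal" where
  "E_Lambda_star \<mu> = enn2ereal (\<integral>\<^sup>+ x. e2ennreal (Lambda_star \<mu> x) \<partial>\<mu>)"

definition log_concave_measure :: "real measure \<Rightarrow> bool" where
  "log_concave_measure \<mu> \<longleftrightarrow>
     (\<forall>A B l. compact A \<and> compact B \<and> A \<noteq> {} \<and> B \<noteq> {} \<and> 0 \<le> l \<and> l \<le> 1 \<longrightarrow>
        measure \<mu> {l * a + (1 - l) * b | a b. a \<in> A \<and> b \<in> B}
          \<ge> measure \<mu> A powr l * measure \<mu> B powr (1 - l))"

definition even_measure :: "real measure \<Rightarrow> bool" where
  "even_measure \<mu> \<longleftrightarrow> (\<forall>A \<in> sets borel. measure \<mu> (uminus ` A) = measure \<mu> A)"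

definition admissible :: "real measure \<Rightarrow> bool" where
  "admissible \<mu> \<longleftrightarrow>
     prob_space.variance \<mu> (\<lambda>x. x) > 0 \<and>
     (\<exists>r>0. \<forall>t. \<bar>t\<bar> < r \<longrightarrow> integrable \<mu> (\<lambda>x. exp (t * x))) \<and>
     (xstar \<mu> < \<infinity> \<longrightarrow> measure \<mu> {real_of_ereal (xstar \<mu>)} = 0) \<and>
     (xstar \<mu> < \<infinity>
      \<or> (xstar \<mu> = \<infinity> \<and> (\<forall>t. Lambda \<mu> t < \<infinity>))
      \<or> (xstar \<mu> = \<infinity> \<and> bounded {t. Lambda \<mu> t < \<infinity>} \<and> log_concave_measure \<mu>))"

(* mu_n = mu^{(x)n}, on the space {..<n} ->E UNIV (points of R^n as functions on {0..n-1}). *)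
definition mu_n :: "real measure \<Rightarrow> nat \<Rightarrow> (nat \<Rightarrow> real) measure" where
  "mu_n \<mu> n = PiM {..<n} (\<lambda>_. \<mu>)"

definition KN :: "nat \<Rightarrow> nat \<Rightarrow> (nat \<Rightarrow> nat \<Rightarrow> real) \<Rightarrow> (nat \<Rightarrow> real) set" where
  "KN n N X = {y \<in> PiE {..<n} (\<lambda>_. UNIV). \<exists>l::nat \<Rightarrow> real.
      (\<forall>i<N. 0 \<le> l i) \<and> (\<Sum>i<N. l i) = 1 \<and> (\<forall>j<n. y j = (\<Sum>i<N. l i * X i j))}"

definition EK :: "real measure \<Rightarrow> nat \<Rightarrow> nat \<Rightarrow> ennreal" where
  "EK \<mu> n N = (\<integral>\<^sup>+ X. emeasure (mu_n \<mu> n) (KN n N X) \<partial>(PiM {..<N} (\<lambda>_. mu_n \<mu> n)))"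

(* rho_1(mu_n, delta); the supremum over an empty range of N is 0. *)
definition rho1 :: "real measure \<Rightarrow> nat \<Rightarrow> real \<Rightarrow> ereal" where
  "rho1 \<mu> n \<delta> = Sup {ereal r | r.
      (SUP N \<in> {N. n < N \<and> real N \<le> exp (r * real n)}. EK \<mu> n N) \<le> ennreal \<delta>}"

end

theory Submission imports Defs begin

lemma prodPi:
  assumes "prob_space M" "finite I" "\<And>i. i \<in> I \<Longrightarrow> f i \<in> borel_measurable M"
  shows "(\<integral>\<^sup>+x. (\<Prod>i\<in>I. f i (x i)) \<partial>PiM I (\<lambda>_. M)) = (\<Prod>i\<in>I. \<integral>\<^sup>+y. f i y \<partial>M)"
proof -
  interpret product_prob_space "\<lambda>_. M" I
    using product_prob_spaceI[of "\<lambda>_. M"] assms(1) by (simp add: product_prob_space_def)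
  show ?thesis using product_nn_integral_prod[of I f] assms by simp
qed

lemma marginal:
  assumes "prob_space M" "finite I" "i \<in> I" "g \<in> borel_measurable M"
  shows "(\<integral>\<^sup>+x. g (x i) \<partial>PiM I (\<lambda>_. M)) = (\<integral>\<^sup>+y. g y \<partial>M)"
proof -
  interpret prob_space M by fact
  define f where "f j = (if j = i then g else (\<lambda>_. 1::ennreal))" for j
  have "(\<integral>\<^sup>+x. g (x i) \<partial>PiM I (\<lambda>_. M)) = (\<integral>\<^sup>+x. (\<Prod>j\<in>I. f j (x j)) \<partial>PiM I (\<lambda>_. M))"
  proof (intro nn_integral_cong)
    fix x
    have "(\<Prod>j\<in>I. f j (x j)) = (\<Prod>j\<in>I. if j = i then g (x i) else 1)"
      by (intro prod.cong) (auto simp: f_def)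
    also have "\<dots> = g (x i)" using assms by (simp add: prod.delta)
    finally show "g (x i) = (\<Prod>j\<in>I. f j (x j))" by simp
  qed
  also have "\<dots> = (\<Prod>j\<in>I. \<integral>\<^sup>+y. f j y \<partial>M)"
    using assms by (intro prodPi) (auto simp: f_def)
  also have "\<dots> = (\<integral>\<^sup>+y. g y \<partial>M)"
  proof -
    have "(\<Prod>j\<in>I. \<integral>\<^sup>+y. f j y \<partial>M) = (\<Prod>j\<in>I. if j = i then (\<integral>\<^sup>+y. g y \<partial>M) else 1)"
      by (intro prod.cong) (auto simp: f_def emeasure_space_1)
    also have "\<dots> = (\<integral>\<^sup>+y. g y \<partial>M)" using assms by (simp add: prod.delta)
    finally show ?thesis .
  qed
  finally show ?thesis .
qed

lemma tail_cdf:
  fixes M :: "real measure" and p :: real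
  assumes "prob_space M" "sets M = sets borel" "0 \<le> p"
  shows "emeasure M {x. measure M {..x} \<le> p} \<le> ennreal p"
proof -
  interpret prob_space M by fact
  have sp: "space M = UNIV" using sets_eq_imp_space_eq[OF assms(2)] by simp
  define F where "F x = measure M {..x}" for x
  have atM: "{..x} \<in> sets M" for x :: real unfolding assms(2) by simp
  have Fmono: "F x \<le> F y" if "x \<le> y" for x y
    unfolding F_def
  proof (rule finite_measure_mono)
    show "{..x} \<subseteq> {..y}" using that by simp
    show "{..y} \<in> sets M" by (rule atM)
  qed
  define A where "A = {x. F x \<le> p}"
  have meas: "F \<in> borel_measurable borel" by (intro borel_measurable_mono monoI Fmono)
  have "{x\<in>space borel. F x \<le> p} \<in> sets borel" using pred_le_const[OF meas, of p] by (simp add: pred_def)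
  then have Asets: "A \<in> sets M" unfolding A_def using assms(2) by simp
  have down: "y \<in> A" if "x \<in> A" "y \<le> x" for x y using that Fmono[of y x] unfolding A_def by simp
  have helper: "emeasure M A \<le> ennreal p" if inc: "incseq c" and cA: "\<And>k. c k \<in> A"
      and cov: "A \<subseteq> (\<Union>k. {..c k})" for c :: "nat \<Rightarrow> real"
  proof -
    have "emeasure M A \<le> emeasure M (\<Union>k. {..c k})"
    proof (rule emeasure_mono[OF cov])
      have "range (\<lambda>k. {..c k}) \<subseteq> sets M" using atM by blast
      then show "(\<Union>k. {..c k}) \<in> sets M" by (rule sets.countable_UN)
    qed
    also have "\<dots> = (SUP k. emeasure M {..c k})"
    proof (intro SUP_emeasure_incseq[symmetric])
      show "range (\<lambda>k. {..c k}) \<subseteq> sets M" using atM by blast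
      show "incseq (\<lambda>k. {..c k})" using inc unfolding incseq_def
        by (simp add: atMost_subset_iff)
    qed
    also have "\<dots> \<le> ennreal p"
    proof (intro SUP_least)
      fix k
      have "emeasure M {..c k} = ennreal (F (c k))" unfolding F_def
        by (rule emeasure_eq_measure)
      also have "\<dots> \<le> ennreal p" using cA[of k] unfolding A_def by (simp add: ennreal_leI)
      finally show "emeasure M {..c k} \<le> ennreal p" .
    qed
    finally show ?thesis .
  qed
  show ?thesis
  proof (cases "A = {}")
    case True then have "{x. measure M {..x} \<le> p} = {}" by (simp add: A_def F_def)
    then show ?thesis by simp
  next
    case ne: False
    show ?thesis
    proof (cases "bdd_above A")
      case False
      have "emeasure M A \<le> ennreal p"
      proof (rule helper[of "\<lambda>k. real k"])
        show "incseq (\<lambda>k. real k)" by (simp add: incseq_def)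
        show "real k \<in> A" for k
        proof -
          obtain x where "x \<in> A" "real k < x" using False unfolding bdd_above_def by (meson not_le)
          then show ?thesis using down by auto
        qed
        show "A \<subseteq> (\<Union>k. {..real k})"
        proof
          fix x assume "x \<in> A"
          have "x \<le> real (nat \<lceil>x\<rceil>)" by (rule real_nat_ceiling_ge)
          then show "x \<in> (\<Union>k. {..real k})" by blast
        qed
      qed
      then show ?thesis unfolding A_def F_def .
    next
      case bdd: True
      define s where "s = Sup A"
      have ub: "x \<le> s" if "x \<in> A" for x using bdd that unfolding s_def by (intro cSup_upper)
      show ?thesis
      proof (cases "s \<in> A")
        case True
        have "emeasure M A \<le> ennreal p"
        proof (rule helper[of "\<lambda>k. s"])
          show "incseq (\<lambda>k. s)" by (simp add: incseq_def)
          show "s \<in> A" for k :: nat by (rule True)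
          show "A \<subseteq> (\<Union>k. {..s})" using ub by blast
        qed
        then show ?thesis unfolding A_def F_def .
      next
        case False
        have "emeasure M A \<le> ennreal p"
        proof (rule helper[of "\<lambda>k. s - 1 / (real k + 1)"])
          show "incseq (\<lambda>k. s - 1 / (real k + 1))"
            by (auto simp: incseq_def intro!: divide_left_mono)
          show "s - 1 / (real k + 1) \<in> A" for k
          proof -
            have "s - 1 / (real k + 1) < s" by simp
            then obtain x where "x \<in> A" "s - 1 / (real k + 1) < x"
              using less_cSupD[OF ne] unfolding s_def by blast
            then show ?thesis using down by auto
          qed
          show "A \<subseteq> (\<Union>k. {..s - 1 / (real k + 1)})"
          proof
            fix x assume "x \<in> A"
            then have "x < s" using ub False by (metis order_less_le)
            then obtain k where "inverse (real (Suc k)) < s - x"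
              using reals_Archimedean[of "s - x"] by auto
            then have k: "1 / (real k + 1) < s - x" by (simp add: inverse_eq_divide add.commute)
            then show "x \<in> (\<Union>k. {..s - 1 / (real k + 1)})" by (auto intro!: exI[of _ k])
          qed
        qed
        then show ?thesis unfolding A_def F_def .
      qed
    qed
  qed
qed

lemma tail_ccdf:
  fixes M :: "real measure" and p :: real
  assumes "prob_space M" "sets M = sets borel" "0 \<le> p"
  shows "emeasure M {x. measure M {x..} \<le> p} \<le> ennreal p"
proof -
  interpret prob_space M by fact
  have sp: "space M = UNIV" using sets_eq_imp_space_eq[OF assms(2)] by simp
  have "(uminus :: real \<Rightarrow> real) \<in> borel_measurable borel"
    by (intro borel_measurable_continuous_onI continuous_on_minus continuous_on_id)
  then have um: "uminus \<in> measurable M borel" by (subst measurable_cong_sets[OF assms(2) refl])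
  define M' where "M' = distr M borel uminus"
  have pM': "prob_space M'" unfolding M'_def by (rule prob_space_distr[OF um])
  have sM': "sets M' = sets borel" unfolding M'_def by simp
  have m': "measure M' {..x} = measure M {-x..}" for x :: real
  proof -
    have "measure M' {..x} = measure M (uminus -` {..x} \<inter> space M)"
      unfolding M'_def by (rule measure_distr[OF um]) simp
    also have "uminus -` {..x} \<inter> space M = {-x..}" using sp by auto
    finally show ?thesis .
  qed
  interpret M': prob_space M' by (rule pM')
  define F where "F x = measure M' {..x}" for x
  have Fmono: "F x \<le> F y" if "x \<le> y" for x y
    unfolding F_def
  proof (rule M'.finite_measure_mono)
    show "{..x} \<subseteq> {..y}" using that by simp
    show "{..y} \<in> sets M'" unfolding sM' by simp
  qed
  have meas: "F \<in> borel_measurable borel" by (intro borel_measurable_mono monoI Fmono)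
  have S: "{x\<in>space borel. F x \<le> p} \<in> sets borel" using pred_le_const[OF meas, of p] by (simp add: pred_def)
  have "emeasure M' {x. F x \<le> p} \<le> ennreal p"
    using tail_cdf[OF pM' sM' assms(3)] unfolding F_def .
  moreover have "emeasure M' {x. F x \<le> p} = emeasure M (uminus -` {x. F x \<le> p} \<inter> space M)"
    unfolding M'_def using S by (intro emeasure_distr[OF um]) simp
  moreover have "uminus -` {x. F x \<le> p} \<inter> space M = {x. measure M {x..} \<le> p}"
    using sp by (auto simp: F_def m')
  ultimately show ?thesis by simp
qed

locale rmeas = prob_space M for M :: "real measure" + assumes sb: "sets M = sets borel"
begin

lemma sp: "space M = UNIV" using sets_eq_imp_space_eq[OF sb] by simp

lemma bm: "f \<in> borel_measurable borel \<Longrightarrow> f \<in> borel_measurable M"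
  by (subst measurable_cong_sets[OF sb refl])

definition intg :: "real \<Rightarrow> bool" where "intg t \<longleftrightarrow> integrable M (\<lambda>x. exp (t * x))"
definition lamr :: "real \<Rightarrow> real" where "lamr t = ln (\<integral>x. exp (t * x) \<partial>M)"

lemma int_pos: assumes "intg t" shows "0 < (\<integral>x. exp (t * x) \<partial>M)"
proof -
  have i: "integrable M (\<lambda>x. exp (t * x))" using assms by (simp add: intg_def)
  have ge: "0 \<le> (\<integral>x. exp (t * x) \<partial>M)" by (intro integral_nonneg_AE) simp
  have "(\<integral>x. exp (t * x) \<partial>M) \<noteq> 0"
  proof
    assume "(\<integral>x. exp (t * x) \<partial>M) = 0"
    then have "AE x in M. exp (t * x) = 0" using integral_nonneg_eq_0_iff_AE[OF i] by simp
    then have "AE x in M. False" by simp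
    then show False using AE_False by simp
  qed
  with ge show ?thesis by linarith
qed

lemma exp_lamr: "intg t \<Longrightarrow> exp (lamr t) = (\<integral>x. exp (t * x) \<partial>M)"
  using int_pos by (simp add: lamr_def)

lemma intg0: "intg 0" by (simp add: intg_def)
lemma lamr0: "lamr 0 = 0" by (simp add: lamr_def prob_space)

lemma chernoff1:
  assumes "intg t"
  shows "(\<integral>\<^sup>+z. ennreal (exp (t * (z - y))) \<partial>M) = ennreal (exp (- (t * y - lamr t)))"
proof -
  have eq: "exp (t * (z - y)) = exp (- (t * y)) * exp (t * z)" for z
    by (simp add: exp_add[symmetric] algebra_simps)
  have int: "integrable M (\<lambda>z. exp (t * (z - y)))"
    unfolding eq using assms by (intro integrable_mult_right) (simp add: intg_def)
  have "(\<integral>\<^sup>+z. ennreal (exp (t * (z - y))) \<partial>M) = ennreal (\<integral>z. exp (t * (z - y)) \<partial>M)"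
    by (intro nn_integral_eq_integral int) simp
  also have "(\<integral>z. exp (t * (z - y)) \<partial>M) = exp (- (t * y)) * (\<integral>z. exp (t * z) \<partial>M)"
    unfolding eq by simp
  also have "\<dots> = exp (- (t * y - lamr t))"
    using exp_lamr[OF assms] by (simp add: exp_diff exp_minus field_simps)
  finally show ?thesis .
qed

lemma mk1:
  assumes "intg t" "0 \<le> t"
  shows "measure M {x..} \<le> exp (- (t * x - lamr t))"
proof -
  have "emeasure M {x..} = (\<integral>\<^sup>+z. indicator {x..} z \<partial>M)"
    using sb by simp
  also have "\<dots> \<le> (\<integral>\<^sup>+z. ennreal (exp (t * (z - x))) \<partial>M)"
  proof (intro nn_integral_mono)
    fix z
    show "indicator {x..} z \<le> ennreal (exp (t * (z - x)))"
    proof (cases "x \<le> z")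
      case True
      then have "0 \<le> t * (z - x)" using assms(2) by simp
      then have "1 \<le> exp (t * (z - x))" by simp
      then show ?thesis using True by (simp add: indicator_def)
    qed (simp add: indicator_def)
  qed
  also have "\<dots> = ennreal (exp (- (t * x - lamr t)))" by (rule chernoff1[OF assms(1)])
  finally show ?thesis by (simp add: emeasure_eq_measure)
qed

lemma mk2:
  assumes "intg t" "t \<le> 0"
  shows "measure M {..x} \<le> exp (- (t * x - lamr t))"
proof -
  have "emeasure M {..x} = (\<integral>\<^sup>+z. indicator {..x} z \<partial>M)"
    using sb by simp
  also have "\<dots> \<le> (\<integral>\<^sup>+z. ennreal (exp (t * (z - x))) \<partial>M)"
  proof (intro nn_integral_mono)
    fix z
    show "indicator {..x} z \<le> ennreal (exp (t * (z - x)))"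
    proof (cases "z \<le> x")
      case True
      then have "0 \<le> t * (z - x)" using assms(2) by (simp add: mult_nonpos_nonpos)
      then have "1 \<le> exp (t * (z - x))" by simp
      then show ?thesis using True by (simp add: indicator_def)
    qed (simp add: indicator_def)
  qed
  also have "\<dots> = ennreal (exp (- (t * x - lamr t)))" by (rule chernoff1[OF assms(1)])
  finally show ?thesis by (simp add: emeasure_eq_measure)
qed

primrec LL :: "(nat \<Rightarrow> real) \<Rightarrow> nat \<Rightarrow> real \<Rightarrow> real" where
  "LL q 0 = (\<lambda>v. 0)"
| "LL q (Suc m) = (\<lambda>v. if intg (q m) \<and> LL q m v < q m * v - lamr (q m)
      then q m * v - lamr (q m) else LL q m v)"

primrec TL :: "(nat \<Rightarrow> real) \<Rightarrow> nat \<Rightarrow> real \<Rightarrow> real" where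
  "TL q 0 = (\<lambda>v. 0)"
| "TL q (Suc m) = (\<lambda>v. if intg (q m) \<and> LL q m v < q m * v - lamr (q m)
      then q m else TL q m v)"

lemma LL_T: "intg (TL q m v) \<and> LL q m v = TL q m v * v - lamr (TL q m v)"
  by (induction m) (auto simp: intg0 lamr0)

lemma LL_Suc: "LL q m v \<le> LL q (Suc m) v" by simp

lemma LL_nonneg: "0 \<le> LL q m v"
  by (induction m) auto

lemma LL_incseq: "incseq (\<lambda>m. LL q m v)"
  by (intro incseq_SucI LL_Suc)

lemma LL_ge: "intg (q k) \<Longrightarrow> q k * v - lamr (q k) \<le> LL q (Suc k) v"
  by simp

lemma LL_meas: "LL q m \<in> borel_measurable borel"
proof (induction m)
  case 0 then show ?case by simp
next
  case (Suc m)
  note [measurable] = Suc.IH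
  show ?case unfolding LL.simps by measurable
qed

lemma LL_tail: "measure M {v..} \<le> exp (- LL q m v) \<or> measure M {..v} \<le> exp (- LL q m v)"
proof -
  define t where "t = TL q m v"
  have i: "intg t" and e: "LL q m v = t * v - lamr t" using LL_T[of q m v] by (simp_all add: t_def)
  show ?thesis
  proof (cases "0 \<le> t")
    case True then show ?thesis using mk1[OF i True, of v] e by simp
  next
    case False then show ?thesis using mk2[OF i, of v] e by simp
  qed
qed

end


context rmeas
begin

lemma Fm1: "(\<lambda>v. measure M {..v}) \<in> borel_measurable borel"
proof (intro borel_measurable_mono monoI)
  fix x y :: real assume "x \<le> y"
  then show "measure M {..x} \<le> measure M {..y}" using sb by (intro finite_measure_mono) auto
qed

lemma Fm2: "(\<lambda>v. measure M {v..}) \<in> borel_measurable borel"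
proof -
  have "(\<lambda>v. - measure M {v..}) \<in> borel_measurable borel"
  proof (intro borel_measurable_mono monoI)
    fix x y :: real assume "x \<le> y"
    then show "- measure M {x..} \<le> - measure M {y..}" using sb by (simp add: finite_measure_mono)
  qed
  then show ?thesis by simp
qed

definition BB :: "nat \<Rightarrow> real set" where
  "BB k = {v. measure M {v..} \<le> exp (- (4 * real k))} \<union> {v. measure M {..v} \<le> exp (- (4 * real k))}"

lemma BB_sets: "BB k \<in> sets M"
proof -
  note [measurable] = Fm1 Fm2
  have "BB k \<in> sets borel" unfolding BB_def by measurable
  then show ?thesis using sb by simp
qed

lemma BB_meas: "emeasure M (BB k) \<le> ennreal (2 * exp (- (4 * real k)))"
proof -
  note [measurable] = Fm1 Fm2
  have s1: "{v. measure M {v..} \<le> exp (- (4 * real k))} \<in> sets M" using sb by simp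
  have s2: "{v. measure M {..v} \<le> exp (- (4 * real k))} \<in> sets M" using sb by simp
  have "emeasure M (BB k) \<le> emeasure M {v. measure M {v..} \<le> exp (- (4 * real k))}
      + emeasure M {v. measure M {..v} \<le> exp (- (4 * real k))}"
    unfolding BB_def by (rule emeasure_subadditive[OF s1 s2])
  also have "\<dots> \<le> ennreal (exp (- (4 * real k))) + ennreal (exp (- (4 * real k)))"
    by (intro add_mono tail_ccdf[OF prob_space_axioms sb] tail_cdf[OF prob_space_axioms sb]) simp_all
  also have "\<dots> = ennreal (2 * exp (- (4 * real k)))"
    by (simp flip: ennreal_plus)
  finally show ?thesis .
qed

definition Vc :: real where "Vc = 32 / (1 - 4 / exp 4)"

lemma e4: "5 \<le> exp (4::real)"
  using exp_ge_add_one_self[of 4] by simp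

lemma Vc_pos: "0 < Vc"
  using e4 by (simp add: Vc_def field_simps)

lemma sq_bound: "(real K + 1)^2 \<le> 4 ^ K"
proof -
  have "real K + 1 \<le> 2 ^ K"
  proof -
    have "K < 2 ^ K" by simp
    then have "K + 1 \<le> 2 ^ K" by (simp add: Suc_leI)
    then have "real (K + 1) \<le> real (2 ^ K)" by (simp only: of_nat_le_iff)
    then show ?thesis by simp
  qed
  then have "(real K + 1)^2 \<le> (2 ^ K)^2" by (intro power_mono) simp_all
  also have "\<dots> = 4 ^ K"
  proof -
    have "(4::real) ^ K = (2 * 2) ^ K" by simp
    also have "\<dots> = 2 ^ K * 2 ^ K" by (rule power_mult_distrib)
    finally show ?thesis by (simp add: power2_eq_square)
  qed
  finally show ?thesis .
qed

lemma LL_pw: "ennreal ((LL q m v)^2) \<le> (\<Sum>k. ennreal (16 * 4 ^ k) * indicator (BB k) v)"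
proof -
  define L where "L = LL q m v"
  have L0: "0 \<le> L" unfolding L_def by (rule LL_nonneg)
  define K where "K = nat \<lfloor>L / 4\<rfloor>"
  have fl0: "0 \<le> \<lfloor>L / 4\<rfloor>" using L0 by simp
  have rK: "real K = real_of_int \<lfloor>L / 4\<rfloor>" unfolding K_def using fl0 by simp
  have f1: "real_of_int \<lfloor>L / 4\<rfloor> \<le> L / 4" by (rule of_int_floor_le)
  have f2: "L / 4 < real_of_int \<lfloor>L / 4\<rfloor> + 1" by (rule real_of_int_floor_add_one_gt)
  have f1': "4 * real_of_int \<lfloor>L / 4\<rfloor> \<le> L" using f1 by (simp add: field_simps)
  have f2': "L < 4 * real_of_int \<lfloor>L / 4\<rfloor> + 4" using f2 by (simp add: field_simps)
  have K1: "4 * real K \<le> L" using rK f1' by linarith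
  have K2: "L < 4 * (real K + 1)" unfolding rK using f2' by (simp add: algebra_simps)
  have ee: "exp (- L) \<le> exp (- (4 * real K))" using K1 by simp
  have "measure M {v..} \<le> exp (- L) \<or> measure M {..v} \<le> exp (- L)"
    using LL_tail[of v q m] L_def by simp
  then have "measure M {v..} \<le> exp (- (4 * real K)) \<or> measure M {..v} \<le> exp (- (4 * real K))"
    using ee by linarith
  then have inB: "v \<in> BB K" unfolding BB_def by simp
  have "L^2 \<le> (4 * (real K + 1))^2" using K2 L0 by (intro power_mono) simp_all
  also have "\<dots> = 16 * (real K + 1)^2" by (simp add: power2_eq_square algebra_simps)
  also have "\<dots> \<le> 16 * 4 ^ K" using sq_bound[of K] by simp
  finally have "ennreal (L^2) \<le> ennreal (16 * 4 ^ K) * indicator (BB K) v"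
    using inB by (simp add: ennreal_leI)
  also have "\<dots> \<le> (\<Sum>k. ennreal (16 * 4 ^ k) * indicator (BB k) v)"
    using ennreal_suminf_lessD[of "\<lambda>k. ennreal (16 * 4 ^ k) * indicator (BB k) v" _ K]
    by (meson not_le order_less_irrefl)
  finally show ?thesis by (simp add: L_def)
qed

lemma LL_sq: "(\<integral>\<^sup>+v. ennreal ((LL q m v)^2) \<partial>M) \<le> ennreal Vc"
proof -
  have "(\<integral>\<^sup>+v. ennreal ((LL q m v)^2) \<partial>M) \<le> (\<integral>\<^sup>+v. (\<Sum>k. ennreal (16 * 4 ^ k) * indicator (BB k) v) \<partial>M)"
    by (intro nn_integral_mono LL_pw)
  also have "\<dots> = (\<Sum>k. \<integral>\<^sup>+v. ennreal (16 * 4 ^ k) * indicator (BB k) v \<partial>M)"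
    using BB_sets by (intro nn_integral_suminf) simp
  also have "\<dots> = (\<Sum>k. ennreal (16 * 4 ^ k) * emeasure M (BB k))"
    using BB_sets by (simp add: nn_integral_cmult_indicator)
  also have "\<dots> \<le> (\<Sum>k. ennreal (32 * (4 / exp 4) ^ k))"
  proof (intro suminf_le summableI)
    fix k
    have "ennreal (16 * 4 ^ k) * emeasure M (BB k) \<le> ennreal (16 * 4 ^ k) * ennreal (2 * exp (- (4 * real k)))"
      by (intro mult_left_mono BB_meas) simp
    also have "\<dots> = ennreal (32 * (4 / exp 4) ^ k)"
    proof -
      have "exp (- (4 * real k)) = (1 / exp 4) ^ k"
        by (simp add: exp_minus exp_of_nat_mult[symmetric] power_one_over mult.commute inverse_eq_divide)
      then have "16 * 4 ^ k * (2 * exp (- (4 * real k))) = 32 * (4 / exp 4) ^ k"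
        by (simp add: power_divide field_simps)
      then show ?thesis by (simp flip: ennreal_mult)
    qed
    finally show "ennreal (16 * 4 ^ k) * emeasure M (BB k) \<le> ennreal (32 * (4 / exp 4) ^ k)" .
  qed
  also have "\<dots> = ennreal Vc"
  proof (rule suminf_ennreal_eq)
    show "0 \<le> 32 * (4 / exp 4 :: real) ^ k" for k by simp
    have "norm (4 / exp 4 :: real) < 1" using e4 by simp
    then have "(\<lambda>k. (4 / exp 4 :: real) ^ k) sums (1 / (1 - 4 / exp 4))" by (rule geometric_sums)
    then have "(\<lambda>k. 32 * (4 / exp 4 :: real) ^ k) sums (32 * (1 / (1 - 4 / exp 4)))" by (rule sums_mult)
    then show "(\<lambda>k. 32 * (4 / exp 4) ^ k) sums Vc" by (simp add: Vc_def)
  qed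
  finally show ?thesis .
qed

end


lemma exp_cvx:
  fixes s a :: real
  assumes "0 \<le> s" "s \<le> 1"
  shows "exp (s * a) \<le> (1 - s) + s * exp a"
  using convex_onD[OF exp_convex, of s 0 a] assms by simp

context rmeas
begin

lemma Lambda_eq: "Lambda M t = (if intg t then ereal (lamr t) else \<infinity>)"
  by (simp add: Lambda_def intg_def lamr_def)

definition qq :: "nat \<Rightarrow> real" where "qq = from_nat_into \<rat>"

lemma qq_surj: "r \<in> \<rat> \<Longrightarrow> \<exists>k. qq k = r"
  unfolding qq_def by (rule from_nat_into_surj[OF countable_rat])

lemma LL_le_star: "ereal (LL q m v) \<le> Lambda_star M v"
proof -
  define t where "t = TL q m v"
  have i: "intg t" and e: "LL q m v = t * v - lamr t" using LL_T[of q m v] by (simp_all add: t_def)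
  have "ereal (LL q m v) = ereal (t * v) - Lambda M t" using i e by (simp add: Lambda_eq)
  also have "\<dots> \<le> Lambda_star M v" unfolding Lambda_star_def by (rule SUP_upper) simp
  finally show ?thesis .
qed

lemma approx_term:
  assumes i: "intg t" and t0: "t \<noteq> 0"
  shows "ereal (t * v - lamr t) \<le> (SUP m. ereal (LL qq m v))"
proof -
  define I where "I = (\<integral>z. exp (t * z) \<partial>M)"
  have Ipos: "0 < I" unfolding I_def by (rule int_pos[OF i])
  have iI: "integrable M (\<lambda>z. exp (t * z))" using i by (simp add: intg_def)
  define a where "a j = t * (1 - inverse (real (Suc j)))" for j
  have "\<exists>r\<in>\<rat>. min t (a j) < r \<and> r < max t (a j)" for j
  proof (rule Rats_dense_in_real)
    have "0 < inverse (real (Suc j))" by simp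
    then have "a j \<noteq> t" using t0 unfolding a_def by (simp add: algebra_simps)
    then show "min t (a j) < max t (a j)" by (simp add: min_def max_def)
  qed
  then obtain r where r: "\<And>j. r j \<in> \<rat>" "\<And>j. min t (a j) < r j" "\<And>j. r j < max t (a j)"
    by metis
  define s where "s j = r j / t" for j
  have rs: "r j = s j * t" for j unfolding s_def using t0 by simp
  have s_bounds: "1 - inverse (real (Suc j)) < s j \<and> s j < 1" for j
  proof (cases "0 < t")
    case True
    then have "a j < t" unfolding a_def by (simp add: algebra_simps)
    then have "a j < r j" "r j < t" using r(2,3)[of j] by (simp_all add: min_def max_def)
    then show ?thesis using True unfolding s_def a_def by (simp add: field_simps)
  next
    case False
    then have tn: "t < 0" using t0 by simp
    have "0 < inverse (real (Suc j))" by simp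
    then have "t * inverse (real (Suc j)) < 0" using tn by (simp add: mult_neg_pos)
    then have "t < a j" unfolding a_def by (simp add: algebra_simps)
    then have "t < r j" "r j < a j" using r(2,3)[of j] by (simp_all add: min_def max_def)
    then show ?thesis using tn unfolding s_def a_def by (simp add: field_simps)
  qed
  have s01: "0 \<le> s j" "s j \<le> 1" for j
  proof -
    have "0 \<le> 1 - inverse (real (Suc j))" by (simp add: inverse_le_1_iff)
    then show "0 \<le> s j" using s_bounds[of j] by linarith
    show "s j \<le> 1" using s_bounds[of j] by linarith
  qed
  define w where "w j = r j * v - ln ((1 - s j) + s j * I)" for j
  have wle: "ereal (w j) \<le> (SUP m. ereal (LL qq m v))" for j
  proof -
    obtain k where k: "qq k = r j" using qq_surj r(1) by blast
    have bnd: "exp (r j * z) \<le> (1 - s j) + s j * exp (t * z)" for z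
      using exp_cvx[OF s01[of j], of "t * z"] by (simp add: rs mult.assoc)
    have ir: "integrable M (\<lambda>z. exp (r j * z))"
    proof (rule Bochner_Integration.integrable_bound[where f="\<lambda>z. (1 - s j) + s j * exp (t * z)"])
      show "integrable M (\<lambda>z. (1 - s j) + s j * exp (t * z))"
        using iI by (intro Bochner_Integration.integrable_add integrable_mult_right) simp_all
      show "(\<lambda>z. exp (r j * z)) \<in> borel_measurable M" by (intro bm) simp
      show "AE z in M. norm (exp (r j * z)) \<le> norm ((1 - s j) + s j * exp (t * z))"
        using bnd s01[of j] by (auto intro!: AE_I2 order_trans[OF _ abs_ge_self])
    qed
    then have iq: "intg (r j)" by (simp add: intg_def)
    have "(\<integral>z. exp (r j * z) \<partial>M) \<le> (\<integral>z. (1 - s j) + s j * exp (t * z) \<partial>M)"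
      using iI ir bnd by (intro integral_mono) (simp_all add: Bochner_Integration.integrable_add integrable_mult_right)
    also have "\<dots> = (1 - s j) + s j * I"
      using iI by (simp add: I_def prob_space)
    finally have le1: "(\<integral>z. exp (r j * z) \<partial>M) \<le> (1 - s j) + s j * I" .
    have "lamr (r j) \<le> ln ((1 - s j) + s j * I)"
      unfolding lamr_def using int_pos[OF iq] le1 by simp
    then have "w j \<le> r j * v - lamr (r j)" unfolding w_def by simp
    also have "\<dots> \<le> LL qq (Suc k) v" using LL_ge[of qq k v] iq k by simp
    finally have "ereal (w j) \<le> ereal (LL qq (Suc k) v)" by simp
    also have "\<dots> \<le> (SUP m. ereal (LL qq m v))" by (rule SUP_upper) simp
    finally show ?thesis .
  qed
  have slim: "s \<longlonglongrightarrow> 1"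
  proof (rule tendsto_sandwich)
    show "\<forall>\<^sub>F j in sequentially. 1 - inverse (real (Suc j)) \<le> s j"
      using s_bounds by (auto intro!: always_eventually less_imp_le)
    show "\<forall>\<^sub>F j in sequentially. s j \<le> 1" using s01 by (auto intro!: always_eventually)
    show "(\<lambda>j. 1 - inverse (real (Suc j))) \<longlonglongrightarrow> 1"
      using tendsto_diff[OF tendsto_const LIMSEQ_inverse_real_of_nat, of 1] by simp
  qed simp
  have "(\<lambda>j. s j * t * v - ln ((1 - s j) + s j * I)) \<longlonglongrightarrow> 1 * t * v - ln ((1 - 1) + 1 * I)"
    using Ipos by (intro tendsto_intros slim) simp
  then have "w \<longlonglongrightarrow> t * v - ln I" unfolding w_def rs by simp
  then have "(\<lambda>j. ereal (w j)) \<longlonglongrightarrow> ereal (t * v - ln I)" by (rule tendsto_ereal)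
  then have "ereal (t * v - ln I) \<le> (SUP m. ereal (LL qq m v))"
    by (rule LIMSEQ_le_const2) (use wle in auto)
  then show ?thesis by (simp add: lamr_def I_def)
qed

lemma LL_conv: "Lambda_star M v = (SUP m. ereal (LL qq m v))"
proof (rule antisym)
  show "(SUP m. ereal (LL qq m v)) \<le> Lambda_star M v" by (intro SUP_least LL_le_star)
  show "Lambda_star M v \<le> (SUP m. ereal (LL qq m v))"
    unfolding Lambda_star_def
  proof (intro SUP_least)
    fix t
    show "ereal (t * v) - Lambda M t \<le> (SUP m. ereal (LL qq m v))"
    proof (cases "intg t")
      case False then show ?thesis by (simp add: Lambda_eq)
    next
      case i: True
      show ?thesis
      proof (cases "t = 0")
        case True
        have "ereal (t * v) - Lambda M t = ereal (LL qq 0 v)" using True by (simp add: Lambda_eq intg0 lamr0)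
        also have "\<dots> \<le> (SUP m. ereal (LL qq m v))" by (rule SUP_upper) simp
        finally show ?thesis .
      next
        case False
        then show ?thesis using approx_term[OF i False, of v] i by (simp add: Lambda_eq)
      qed
    qed
  qed
qed

end


context rmeas
begin

lemma LL_meas_M: "LL q m \<in> borel_measurable M" by (rule bm[OF LL_meas])
lemma TL_meas: "TL q m \<in> borel_measurable borel"
proof (induction m)
  case 0 then show ?case by simp
next
  case (Suc m)
  note [measurable] = Suc.IH LL_meas
  show ?case unfolding TL.simps by measurable
qed

lemma LL_int_bound: "(\<integral>\<^sup>+v. ennreal (LL q m v) \<partial>M) \<le> ennreal (1 + Vc)"
proof -
  have "(\<integral>\<^sup>+v. ennreal (LL q m v) \<partial>M) \<le> (\<integral>\<^sup>+v. 1 + ennreal ((LL q m v)^2) \<partial>M)"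
  proof (intro nn_integral_mono)
    fix v
    have "LL q m v \<le> 1 + (LL q m v)^2"
    proof (cases "LL q m v \<le> 1")
      case True then show ?thesis by (smt (verit) zero_le_power2)
    next
      case False then have "LL q m v \<le> (LL q m v)^2" by (simp add: power2_eq_square)
      then show ?thesis by simp
    qed
    then have "ennreal (LL q m v) \<le> ennreal (1 + (LL q m v)^2)" by (rule ennreal_leI)
    then show "ennreal (LL q m v) \<le> 1 + ennreal ((LL q m v)^2)" by (simp add: ennreal_plus)
  qed
  also have "\<dots> = 1 + (\<integral>\<^sup>+v. ennreal ((LL q m v)^2) \<partial>M)"
    using LL_meas_M by (subst nn_integral_add) (simp_all add: emeasure_space_1)
  also have "\<dots> \<le> 1 + ennreal Vc" by (intro add_left_mono LL_sq)
  also have "\<dots> = ennreal (1 + Vc)" using Vc_pos by (simp add: ennreal_plus)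
  finally show ?thesis .
qed

lemma LL_integrable: "integrable M (LL q m)"
proof (rule integrableI_nonneg)
  show "LL q m \<in> borel_measurable M" by (rule LL_meas_M)
  show "AE x in M. 0 \<le> LL q m x" by (simp add: LL_nonneg)
  show "(\<integral>\<^sup>+x. ennreal (LL q m x) \<partial>M) < \<infinity>"
    using LL_int_bound[of q m] by (simp add: le_less_trans)
qed

lemma LL2_integrable: "integrable M (\<lambda>v. (LL q m v)^2)"
proof (rule integrableI_nonneg)
  show "(\<lambda>v. (LL q m v)^2) \<in> borel_measurable M" using LL_meas_M by simp
  show "AE x in M. 0 \<le> (LL q m x)^2" by simp
  show "(\<integral>\<^sup>+x. ennreal ((LL q m x)^2) \<partial>M) < \<infinity>"
    using LL_sq[of q m] by (simp add: le_less_trans)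
qed

lemma LL2_int_le: "(\<integral>v. (LL q m v)^2 \<partial>M) \<le> Vc"
proof -
  have "ennreal (\<integral>v. (LL q m v)^2 \<partial>M) = (\<integral>\<^sup>+v. ennreal ((LL q m v)^2) \<partial>M)"
    by (rule nn_integral_eq_integral[symmetric]) (simp_all add: LL2_integrable)
  also have "\<dots> \<le> ennreal Vc" by (rule LL_sq)
  finally show ?thesis using Vc_pos by (simp add: ennreal_le_iff)
qed

lemma LL_int_eq: "(\<integral>\<^sup>+v. ennreal (LL q m v) \<partial>M) = ennreal (\<integral>v. LL q m v \<partial>M)"
  by (rule nn_integral_eq_integral) (simp_all add: LL_integrable LL_nonneg)

lemma E_repr:
  "\<exists>E0\<ge>0. E_Lambda_star M = ereal E0 \<and> (\<forall>e>0. \<exists>m. E0 - e < (\<integral>v. LL qq m v \<partial>M))"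
proof -
  define Es where "Es = (SUP m. \<integral>\<^sup>+v. ennreal (LL qq m v) \<partial>M)"
  have pw: "e2ennreal (Lambda_star M v) = (SUP m. ennreal (LL qq m v))" for v
  proof -
    have mono: "mono (\<lambda>m. ereal (LL qq m v))"
      using LL_incseq[of qq v] by (simp add: mono_def incseq_def)
    have "e2ennreal (Lambda_star M v) = e2ennreal (SUP m. ereal (LL qq m v))" by (simp add: LL_conv)
    also have "\<dots> = (SUP m. e2ennreal (ereal (LL qq m v)))"
      using sup_continuousD[OF sup_continuous_e2ennreal[OF sup_continuous_id] mono] by simp
    finally show ?thesis by simp
  qed
  have "(\<integral>\<^sup>+v. e2ennreal (Lambda_star M v) \<partial>M) = (\<integral>\<^sup>+v. (SUP m. ennreal (LL qq m v)) \<partial>M)"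
    by (simp add: pw)
  also have "\<dots> = Es" unfolding Es_def
  proof (rule nn_integral_monotone_convergence_SUP)
    show "incseq (\<lambda>m v. ennreal (LL qq m v))"
      using LL_incseq by (auto simp: incseq_def le_fun_def intro!: ennreal_leI)
    show "(\<lambda>v. ennreal (LL qq i v)) \<in> borel_measurable M" for i using LL_meas_M by simp
  qed
  finally have EL: "E_Lambda_star M = enn2ereal Es" by (simp add: E_Lambda_star_def)
  have "Es \<le> ennreal (1 + Vc)" unfolding Es_def by (intro SUP_least LL_int_bound)
  then have "Es < \<infinity>" by (simp add: le_less_trans)
  then obtain E0 where E0: "0 \<le> E0" "Es = ennreal E0" by (metis less_top_ennreal top_ennreal.rep_eq infinity_ennreal_def)
  have "\<exists>m. E0 - e < (\<integral>v. LL qq m v \<partial>M)" if e: "0 < e" for e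
  proof (cases "E0 - e < 0")
    case True
    have "0 \<le> (\<integral>v. LL qq 0 v \<partial>M)" by simp
    then show ?thesis using True by (intro exI[of _ 0]) linarith
  next
    case False
    have "ennreal (E0 - e) < ennreal E0" using False e by (simp add: ennreal_lessI)
    then have "ennreal (E0 - e) < Es" using E0 by simp
    then obtain m where "ennreal (E0 - e) < (\<integral>\<^sup>+v. ennreal (LL qq m v) \<partial>M)"
      unfolding Es_def by (auto simp: less_SUP_iff)
    then have "ennreal (E0 - e) < ennreal (\<integral>v. LL qq m v \<partial>M)" by (simp add: LL_int_eq)
    moreover have "0 \<le> E0 - e" using False by simp
    ultimately have "E0 - e < (\<integral>v. LL qq m v \<partial>M)" using ennreal_less_iff by blast
    then show ?thesis by blast
  qed
  moreover have "E_Lambda_star M = ereal E0" using EL E0 by simp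
  ultimately show ?thesis using E0 by blast
qed

end


lemma exp_neg_le: fixes u :: real assumes "0 \<le> u" shows "exp (- u) \<le> 1 - u + u^2"
proof -
  have e: "1 + u \<le> exp u" by (rule exp_ge_add_one_self)
  have p: "0 < 1 + u" using assms by simp
  have "exp (- u) = 1 / exp u" by (simp add: exp_minus inverse_eq_divide)
  also have "\<dots> \<le> 1 / (1 + u)" using e p by (intro divide_left_mono) simp_all
  also have "\<dots> \<le> 1 - u + u^2"
  proof -
    have "1 \<le> (1 + u) * (1 - u + u^2)" using assms by (simp add: algebra_simps power2_eq_square power3_eq_cube)
    then show ?thesis using p by (simp add: divide_le_eq mult.commute)
  qed
  finally show ?thesis .
qed

context rmeas
begin

lemma mgf_lower:
  assumes l: "0 \<le> l"
  shows "(\<integral>\<^sup>+v. ennreal (exp (- (l * LL q m v))) \<partial>M) \<le> ennreal (exp (- (l * (\<integral>v. LL q m v \<partial>M)) + l^2 * Vc))"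
proof -
  have meas: "(\<lambda>v. exp (- (l * LL q m v))) \<in> borel_measurable M" using LL_meas_M by simp
  have ie: "integrable M (\<lambda>v. exp (- (l * LL q m v)))"
  proof (rule Bochner_Integration.integrable_bound[where f="\<lambda>_. 1::real"])
    show "integrable M (\<lambda>_. 1::real)" by simp
    show "AE x in M. norm (exp (- (l * LL q m x))) \<le> norm (1::real)"
      using l LL_nonneg by (auto intro!: AE_I2)
  qed (rule meas)
  have i2: "integrable M (\<lambda>v. 1 - l * LL q m v + l^2 * (LL q m v)^2)"
    using LL_integrable LL2_integrable
    by (intro Bochner_Integration.integrable_add Bochner_Integration.integrable_diff integrable_mult_right) simp_all
  have "(\<integral>\<^sup>+v. ennreal (exp (- (l * LL q m v))) \<partial>M) = ennreal (\<integral>v. exp (- (l * LL q m v)) \<partial>M)"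
    by (rule nn_integral_eq_integral[OF ie]) simp
  also have "(\<integral>v. exp (- (l * LL q m v)) \<partial>M) \<le> (\<integral>v. 1 - l * LL q m v + l^2 * (LL q m v)^2 \<partial>M)"
  proof (rule integral_mono[OF ie i2])
    fix v
    have "0 \<le> l * LL q m v" using l LL_nonneg by simp
    from exp_neg_le[OF this] show "exp (- (l * LL q m v)) \<le> 1 - l * LL q m v + l^2 * (LL q m v)^2"
      by (simp add: power_mult_distrib)
  qed
  also have "\<dots> = 1 - l * (\<integral>v. LL q m v \<partial>M) + l^2 * (\<integral>v. (LL q m v)^2 \<partial>M)"
    using LL_integrable LL2_integrable
    by (simp add: Bochner_Integration.integral_add Bochner_Integration.integral_diff
        Bochner_Integration.integrable_diff prob_space)
  also have "\<dots> \<le> 1 - l * (\<integral>v. LL q m v \<partial>M) + l^2 * Vc"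
    using LL2_int_le by (intro add_left_mono mult_left_mono) simp_all
  also have "\<dots> \<le> exp (- (l * (\<integral>v. LL q m v \<partial>M)) + l^2 * Vc)"
  proof -
    have "1 + (- (l * (\<integral>v. LL q m v \<partial>M)) + l^2 * Vc) \<le> exp (- (l * (\<integral>v. LL q m v \<partial>M)) + l^2 * Vc)"
      by (rule exp_ge_add_one_self)
    then show ?thesis by linarith
  qed
  finally show ?thesis by (simp add: ennreal_leI)
qed

lemma prob_Pi: "prob_space (mu_n M n)"
  unfolding mu_n_def by (intro prob_space_PiM prob_space_axioms)

lemma halfspace:
  "(\<integral>\<^sup>+z. ennreal (exp (\<Sum>j<n. TL q m (y j) * (z j - y j))) \<partial>mu_n M n)
     = ennreal (exp (- (\<Sum>j<n. LL q m (y j))))"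
proof -
  have "(\<integral>\<^sup>+z. ennreal (exp (\<Sum>j<n. TL q m (y j) * (z j - y j))) \<partial>mu_n M n)
      = (\<integral>\<^sup>+z. (\<Prod>j<n. ennreal (exp (TL q m (y j) * (z j - y j)))) \<partial>mu_n M n)"
    by (intro nn_integral_cong) (simp add: exp_sum prod_ennreal)
  also have "\<dots> = (\<Prod>j<n. \<integral>\<^sup>+w. ennreal (exp (TL q m (y j) * (w - y j))) \<partial>M)"
    unfolding mu_n_def
    by (rule prodPi[OF prob_space_axioms, of "{..<n}" "\<lambda>j w. ennreal (exp (TL q m (y j) * (w - y j)))"])
       (simp_all add: bm)
  also have "\<dots> = (\<Prod>j<n. ennreal (exp (- LL q m (y j))))"
  proof (intro prod.cong refl)
    fix j
    have "(\<integral>\<^sup>+w. ennreal (exp (TL q m (y j) * (w - y j))) \<partial>M)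
        = ennreal (exp (- (TL q m (y j) * y j - lamr (TL q m (y j)))))"
      using LL_T[of q m "y j"] by (intro chernoff1) simp
    also have "\<dots> = ennreal (exp (- LL q m (y j)))" using LL_T[of q m "y j"] by simp
    finally show "(\<integral>\<^sup>+w. ennreal (exp (TL q m (y j) * (w - y j))) \<partial>M) = ennreal (exp (- LL q m (y j)))" .
  qed
  also have "\<dots> = ennreal (exp (- (\<Sum>j<n. LL q m (y j))))"
    by (simp add: prod_ennreal exp_sum sum_negf[symmetric])
  finally show ?thesis .
qed

lemma S_meas: "(\<lambda>y. \<Sum>j<n. LL q m (y j)) \<in> borel_measurable (mu_n M n)"
proof -
  note [measurable] = LL_meas_M
  show ?thesis unfolding mu_n_def by measurable
qed

lemma lowertail:
  assumes l: "0 \<le> l"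
  shows "emeasure (mu_n M n) {y \<in> space (mu_n M n). (\<Sum>j<n. LL q m (y j)) \<le> A}
    \<le> ennreal (exp (l * A) * exp (- (l * (\<integral>v. LL q m v \<partial>M)) + l^2 * Vc) ^ n)"
proof -
  define m0 where "m0 = (\<integral>v. LL q m v \<partial>M)"
  note [measurable] = LL_meas_M
  have Bs: "{y \<in> space (mu_n M n). (\<Sum>j<n. LL q m (y j)) \<le> A} \<in> sets (mu_n M n)"
    using S_meas by measurable
  have "emeasure (mu_n M n) {y \<in> space (mu_n M n). (\<Sum>j<n. LL q m (y j)) \<le> A}
      = (\<integral>\<^sup>+y. indicator {y \<in> space (mu_n M n). (\<Sum>j<n. LL q m (y j)) \<le> A} y \<partial>mu_n M n)"
    using Bs by simp
  also have "\<dots> \<le> (\<integral>\<^sup>+y. ennreal (exp (l * A)) * (\<Prod>j<n. ennreal (exp (- (l * LL q m (y j))))) \<partial>mu_n M n)"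
  proof (intro nn_integral_mono)
    fix y
    have eq: "ennreal (exp (l * A)) * (\<Prod>j<n. ennreal (exp (- (l * LL q m (y j)))))
        = ennreal (exp (l * (A - (\<Sum>j<n. LL q m (y j)))))"
      by (simp add: prod_ennreal exp_sum[symmetric] ennreal_mult[symmetric] exp_add[symmetric]
          sum_negf sum_distrib_left algebra_simps)
    show "indicator {y \<in> space (mu_n M n). (\<Sum>j<n. LL q m (y j)) \<le> A} y
        \<le> ennreal (exp (l * A)) * (\<Prod>j<n. ennreal (exp (- (l * LL q m (y j)))))"
      unfolding eq
    proof (cases "(\<Sum>j<n. LL q m (y j)) \<le> A")
      case True
      then have "0 \<le> l * (A - (\<Sum>j<n. LL q m (y j)))" using l by simp
      then have "1 \<le> exp (l * (A - (\<Sum>j<n. LL q m (y j))))" by simp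
      then show "indicator {y \<in> space (mu_n M n). (\<Sum>j<n. LL q m (y j)) \<le> A} y
          \<le> ennreal (exp (l * (A - (\<Sum>j<n. LL q m (y j)))))"
        by (simp add: indicator_def)
    qed (simp add: indicator_def)
  qed
  also have "\<dots> = ennreal (exp (l * A)) * (\<integral>\<^sup>+y. (\<Prod>j<n. ennreal (exp (- (l * LL q m (y j))))) \<partial>mu_n M n)"
    unfolding mu_n_def by (intro nn_integral_cmult) measurable
  also have "(\<integral>\<^sup>+y. (\<Prod>j<n. ennreal (exp (- (l * LL q m (y j))))) \<partial>mu_n M n)
      = (\<Prod>j<n. \<integral>\<^sup>+v. ennreal (exp (- (l * LL q m v))) \<partial>M)"
    unfolding mu_n_def
    by (rule prodPi[OF prob_space_axioms, of "{..<n}" "\<lambda>j v. ennreal (exp (- (l * LL q m v)))"])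
       (simp_all add: LL_meas_M)
  also have "\<dots> \<le> (\<Prod>j<n. ennreal (exp (- (l * m0) + l^2 * Vc)))"
    unfolding m0_def by (intro prod_mono_ennreal mgf_lower l)
  also have "\<dots> = ennreal (exp (- (l * m0) + l^2 * Vc) ^ n)"
    by (simp add: ennreal_power)
  finally show ?thesis
    by (simp add: m0_def ennreal_mult[symmetric] mult_left_mono)
qed

end

lemma geom:
  fixes l :: "nat \<Rightarrow> real" and X :: "nat \<Rightarrow> nat \<Rightarrow> real" and y T :: "nat \<Rightarrow> real"
  assumes l0: "\<forall>i<N. 0 \<le> l i" and l1: "(\<Sum>i<N. l i) = 1" and yl: "\<forall>j<n. y j = (\<Sum>i<N. l i * X i j)"
  shows "\<exists>i<N. 0 \<le> (\<Sum>j<n. T j * (X i j - y j))"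
proof (rule ccontr)
  assume "\<not> ?thesis"
  then have neg: "\<And>i. i < N \<Longrightarrow> (\<Sum>j<n. T j * (X i j - y j)) < 0" by (simp add: not_le)
  define c where "c i = (\<Sum>j<n. T j * (X i j - y j))" for i
  have "(\<Sum>i<N. l i * c i) = (\<Sum>i<N. \<Sum>j<n. l i * (T j * (X i j - y j)))"
    by (simp add: c_def sum_distrib_left)
  also have "\<dots> = (\<Sum>j<n. \<Sum>i<N. l i * (T j * (X i j - y j)))" by (rule sum.swap)
  also have "\<dots> = (\<Sum>j<n. T j * ((\<Sum>i<N. l i * X i j) - (\<Sum>i<N. l i) * y j))"
    by (intro sum.cong refl) (simp add: sum_distrib_left sum_distrib_right sum_subtractf algebra_simps)
  also have "\<dots> = 0" using yl l1 by simp
  finally have zero: "(\<Sum>i<N. l i * c i) = 0" .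
  obtain i0 where i0: "i0 < N" "0 < l i0"
  proof (rule ccontr)
    assume "\<not> thesis"
    then have "\<forall>i<N. l i \<le> 0" using that by (meson not_le)
    then have "\<forall>i<N. l i = 0" using l0 by (simp add: order_antisym)
    then have "(\<Sum>i<N. l i) = 0" by simp
    then show False using l1 by simp
  qed
  have "(\<Sum>i<N. l i * c i) < (\<Sum>i<N. 0)"
  proof (rule sum_strict_mono_ex1)
    show "finite {..<N}" by simp
    show "\<forall>i\<in>{..<N}. l i * c i \<le> 0"
      using l0 neg by (auto simp: c_def intro: mult_nonneg_nonpos less_imp_le)
    show "\<exists>i\<in>{..<N}. l i * c i < 0"
      using i0 neg[OF i0(1)] by (intro bexI[of _ i0]) (simp_all add: c_def mult_pos_neg)
  qed
  then show False using zero by simp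
qed

context rmeas
begin

lemma TL_meas_M: "TL q m \<in> borel_measurable M" by (rule bm[OF TL_meas])

lemma EK_bound:
  "EK M n N \<le> emeasure (mu_n M n) {y \<in> space (mu_n M n). (\<Sum>j<n. LL q m (y j)) \<le> a}
      + of_nat N * ennreal (exp (- a))"
proof -
  note [measurable] = LL_meas_M TL_meas_M
  define MN where "MN = mu_n M n"
  define P where "P = PiM {..<N} (\<lambda>_. MN)"
  define S where "S y = (\<Sum>j<n. LL q m (y j))" for y :: "nat \<Rightarrow> real"
  define B where "B = {y \<in> space MN. S y \<le> a}"
  define g where "g X y = indicator B y + (if S y \<le> a then 0 else 1) *
      (\<Sum>i<N. ennreal (exp (\<Sum>j<n. TL q m (y j) * (X i j - y j))))" for X :: "nat \<Rightarrow> nat \<Rightarrow> real" and y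
  interpret MN: prob_space MN unfolding MN_def by (rule prob_Pi)
  interpret P: prob_space P unfolding P_def by (intro prob_space_PiM MN.prob_space_axioms)
  interpret PM: pair_sigma_finite P MN
    by (intro pair_sigma_finite.intro P.sigma_finite_measure_axioms MN.sigma_finite_measure_axioms)
  have Smeas[measurable]: "S \<in> borel_measurable MN" unfolding S_def MN_def by (rule S_meas)
  have Bs[measurable]: "B \<in> sets MN" unfolding B_def by measurable
  have meq: "\<And>X. measurable X M = measurable X borel" by (rule measurable_cong_sets[OF refl sb])
  have c1: "(\<lambda>x. fst x i j) \<in> borel_measurable (Pi\<^sub>M {..<N} (\<lambda>_. Pi\<^sub>M {..<n} (\<lambda>_. M)) \<Otimes>\<^sub>M Pi\<^sub>M {..<n} (\<lambda>_. M))"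
    if "i \<in> {..<N}" "j \<in> {..<n}" for i j
  proof -
    have f1: "(\<lambda>x. fst x i) \<in> measurable (Pi\<^sub>M {..<N} (\<lambda>_. Pi\<^sub>M {..<n} (\<lambda>_. M)) \<Otimes>\<^sub>M Pi\<^sub>M {..<n} (\<lambda>_. M)) (Pi\<^sub>M {..<n} (\<lambda>_. M))"
      using that by (intro measurable_compose[OF measurable_fst] measurable_component_singleton) simp
    have f2: "(\<lambda>z. z j) \<in> measurable (Pi\<^sub>M {..<n} (\<lambda>_. M)) M"
      using that by (intro measurable_component_singleton) simp
    have "(\<lambda>x. fst x i j) \<in> measurable (Pi\<^sub>M {..<N} (\<lambda>_. Pi\<^sub>M {..<n} (\<lambda>_. M)) \<Otimes>\<^sub>M Pi\<^sub>M {..<n} (\<lambda>_. M)) M"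
      using measurable_compose[OF f1 f2] by simp
    then show ?thesis by (simp only: meq)
  qed
  have c2: "(\<lambda>x. snd x j) \<in> borel_measurable (Pi\<^sub>M {..<N} (\<lambda>_. Pi\<^sub>M {..<n} (\<lambda>_. M)) \<Otimes>\<^sub>M Pi\<^sub>M {..<n} (\<lambda>_. M))"
    if "j \<in> {..<n}" for j
  proof -
    have "(\<lambda>x. snd x j) \<in> measurable (Pi\<^sub>M {..<N} (\<lambda>_. Pi\<^sub>M {..<n} (\<lambda>_. M)) \<Otimes>\<^sub>M Pi\<^sub>M {..<n} (\<lambda>_. M)) M"
      using that by measurable
    then show ?thesis by (simp only: meq)
  qed
  have gmeas: "case_prod g \<in> borel_measurable (P \<Otimes>\<^sub>M MN)"
    unfolding g_def P_def MN_def mu_n_def S_def B_def by measurable (auto intro: c1 c2)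
  have step1: "emeasure MN (KN n N X) \<le> (\<integral>\<^sup>+y. g X y \<partial>MN)" for X
  proof (cases "KN n N X \<in> sets MN")
    case False then show ?thesis by (simp add: emeasure_notin_sets)
  next
    case True
    have "emeasure MN (KN n N X) = (\<integral>\<^sup>+y. indicator (KN n N X) y \<partial>MN)"
      using True by simp
    also have "\<dots> \<le> (\<integral>\<^sup>+y. g X y \<partial>MN)"
    proof (intro nn_integral_mono)
      fix y assume ysp: "y \<in> space MN"
      show "indicator (KN n N X) y \<le> g X y"
      proof (cases "y \<in> KN n N X")
        case False then show ?thesis by simp
      next
        case yK: True
        then obtain l where l0: "\<forall>i<N. 0 \<le> l i" and l1: "(\<Sum>i<N. l i) = 1"
          and yl: "\<forall>j<n. y j = (\<Sum>i<N. l i * X i j)"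
          unfolding KN_def by blast
        show ?thesis
        proof (cases "S y \<le> a")
          case True
          then have "y \<in> B" using ysp by (simp add: B_def)
          then show ?thesis using yK by (simp add: g_def)
        next
          case False
          obtain i where i: "i < N" "0 \<le> (\<Sum>j<n. TL q m (y j) * (X i j - y j))"
            using geom[OF l0 l1 yl, of "\<lambda>j. TL q m (y j)"] by blast
          have "(1::ennreal) \<le> ennreal (exp (\<Sum>j<n. TL q m (y j) * (X i j - y j)))"
            using i(2) by simp
          also have "\<dots> \<le> (\<Sum>i<N. ennreal (exp (\<Sum>j<n. TL q m (y j) * (X i j - y j))))"
            by (rule member_le_sum) (simp_all add: i(1))
          also have "\<dots> \<le> g X y" using False by (simp add: g_def)
          finally show ?thesis using yK by simp
        qed
      qed
    qed
    finally show ?thesis .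
  qed
  have "EK M n N = (\<integral>\<^sup>+X. emeasure MN (KN n N X) \<partial>P)" by (simp add: EK_def P_def MN_def)
  also have "\<dots> \<le> (\<integral>\<^sup>+X. (\<integral>\<^sup>+y. g X y \<partial>MN) \<partial>P)" by (intro nn_integral_mono step1)
  also have "\<dots> = (\<integral>\<^sup>+y. (\<integral>\<^sup>+X. g X y \<partial>P) \<partial>MN)" by (rule PM.Fubini'[OF gmeas, symmetric])
  also have "\<dots> \<le> (\<integral>\<^sup>+y. indicator B y + of_nat N * ennreal (exp (- a)) \<partial>MN)"
  proof (intro nn_integral_mono)
    fix y assume ysp: "y \<in> space MN"
    have d1: "(\<lambda>X. X i j) \<in> borel_measurable (Pi\<^sub>M {..<N} (\<lambda>_. Pi\<^sub>M {..<n} (\<lambda>_. M)))"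
      if "i < N" "j \<in> {..<n}" for i j
    proof -
      have f1: "(\<lambda>X. X i) \<in> measurable (Pi\<^sub>M {..<N} (\<lambda>_. Pi\<^sub>M {..<n} (\<lambda>_. M))) (Pi\<^sub>M {..<n} (\<lambda>_. M))"
        using that by (intro measurable_component_singleton) simp
      have f2: "(\<lambda>z. z j) \<in> measurable (Pi\<^sub>M {..<n} (\<lambda>_. M)) M"
        using that by (intro measurable_component_singleton) simp
      have "(\<lambda>X. X i j) \<in> measurable (Pi\<^sub>M {..<N} (\<lambda>_. Pi\<^sub>M {..<n} (\<lambda>_. M))) M"
        using measurable_compose[OF f1 f2] by simp
      then show ?thesis by (simp only: meq)
    qed
    have mi: "(\<lambda>X. ennreal (exp (\<Sum>j<n. TL q m (y j) * (X i j - y j)))) \<in> borel_measurable P"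
      if "i < N" for i
      unfolding P_def MN_def mu_n_def by measurable (use that in \<open>auto intro!: d1\<close>)
    have marg: "(\<integral>\<^sup>+X. ennreal (exp (\<Sum>j<n. TL q m (y j) * (X i j - y j))) \<partial>P)
        = ennreal (exp (- S y))" if "i < N" for i
    proof -
      have "(\<integral>\<^sup>+X. ennreal (exp (\<Sum>j<n. TL q m (y j) * (X i j - y j))) \<partial>P)
          = (\<integral>\<^sup>+z. ennreal (exp (\<Sum>j<n. TL q m (y j) * (z j - y j))) \<partial>MN)"
      proof -
        have d2: "(\<lambda>z. z j) \<in> borel_measurable (Pi\<^sub>M {..<n} (\<lambda>_. M))" if "j \<in> {..<n}" for j
        proof -
          have "(\<lambda>z. z j) \<in> measurable (Pi\<^sub>M {..<n} (\<lambda>_. M)) M"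
            using that by (intro measurable_component_singleton) simp
          then show ?thesis by (simp only: meq)
        qed
        have "(\<lambda>z. ennreal (exp (\<Sum>j<n. TL q m (y j) * (z j - y j)))) \<in> borel_measurable MN"
          unfolding MN_def mu_n_def by measurable (auto intro!: d2)
        then show ?thesis
          unfolding P_def using that
          by (intro marginal[OF MN.prob_space_axioms, of "{..<N}" i]) simp_all
      qed
      also have "\<dots> = ennreal (exp (- S y))" unfolding MN_def S_def by (rule halfspace)
      finally show ?thesis .
    qed
    have "(\<integral>\<^sup>+X. g X y \<partial>P) = indicator B y + (if S y \<le> a then 0 else 1) *
        (\<Sum>i<N. \<integral>\<^sup>+X. ennreal (exp (\<Sum>j<n. TL q m (y j) * (X i j - y j))) \<partial>P)"
    proof -
      define c where "c = (if S y \<le> a then 0 else 1::ennreal)"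
      define f where "f i X = ennreal (exp (\<Sum>j<n. TL q m (y j) * (X i j - y j)))"
        for i :: nat and X :: "nat \<Rightarrow> nat \<Rightarrow> real"
      have fm: "f i \<in> borel_measurable P" if "i \<in> {..<N}" for i
        unfolding f_def using mi that by simp
      have "(\<integral>\<^sup>+X. g X y \<partial>P) = (\<integral>\<^sup>+X. indicator B y + c * (\<Sum>i<N. f i X) \<partial>P)"
        by (simp add: g_def c_def f_def)
      also have "\<dots> = (\<integral>\<^sup>+X. indicator B y \<partial>P) + (\<integral>\<^sup>+X. c * (\<Sum>i<N. f i X) \<partial>P)"
        using fm by (intro nn_integral_add) auto
      also have "(\<integral>\<^sup>+X. indicator B y \<partial>P) = indicator B y" by (simp add: P.emeasure_space_1)
      also have "(\<integral>\<^sup>+X. c * (\<Sum>i<N. f i X) \<partial>P) = c * (\<integral>\<^sup>+X. (\<Sum>i<N. f i X) \<partial>P)"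
        using fm by (intro nn_integral_cmult) auto
      also have "(\<integral>\<^sup>+X. (\<Sum>i<N. f i X) \<partial>P) = (\<Sum>i<N. \<integral>\<^sup>+X. f i X \<partial>P)"
        using fm by (intro nn_integral_sum) auto
      finally show ?thesis by (simp add: c_def f_def)
    qed
    also have "\<dots> = indicator B y + (if S y \<le> a then 0 else 1) * (of_nat N * ennreal (exp (- S y)))"
    proof -
      have "(\<Sum>i<N. \<integral>\<^sup>+X. ennreal (exp (\<Sum>j<n. TL q m (y j) * (X i j - y j))) \<partial>P)
          = (\<Sum>i<N. ennreal (exp (- S y)))"
        by (intro sum.cong refl) (simp add: marg)
      then show ?thesis by simp
    qed
    also have "\<dots> \<le> indicator B y + of_nat N * ennreal (exp (- a))"
    proof (cases "S y \<le> a")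
      case False
      then have "ennreal (exp (- S y)) \<le> ennreal (exp (- a))" by (intro ennreal_leI) simp
      then show ?thesis using False by (simp add: mult_left_mono add_left_mono)
    qed simp
    finally show "(\<integral>\<^sup>+X. g X y \<partial>P) \<le> indicator B y + of_nat N * ennreal (exp (- a))" .
  qed
  also have "\<dots> = emeasure MN B + of_nat N * ennreal (exp (- a))"
    by (simp add: nn_integral_add MN.emeasure_space_1)
  finally show ?thesis by (simp add: B_def S_def MN_def)
qed

end


lemma rho1_ge:
  assumes "\<And>N. n < N \<Longrightarrow> real N \<le> exp (r * real n) \<Longrightarrow> EK M n N \<le> ennreal d"
  shows "ereal r \<le> rho1 M n d"
proof -
  have "(SUP N \<in> {N. n < N \<and> real N \<le> exp (r * real n)}. EK M n N) \<le> ennreal d"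
    using assms by (intro SUP_least) auto
  then have "ereal r \<in> {ereal r | r. (SUP N \<in> {N. n < N \<and> real N \<le> exp (r * real n)}. EK M n N) \<le> ennreal d}"
    by blast
  then show ?thesis unfolding rho1_def by (rule Sup_upper)
qed

theorem theorem3p1:
  fixes \<mu> :: "real measure" and \<delta> :: real
  assumes "prob_space \<mu>" and "sets \<mu> = sets borel"
    and "admissible \<mu>" and "even_measure \<mu>"
    and "0 < \<delta>" and "\<delta> < 1/2"
  shows "\<exists>c>0. \<exists>n0::nat. \<forall>n\<ge>n0.
           rho1 \<mu> n \<delta> \<ge> ereal (1 - c / sqrt (real n)) * E_Lambda_star \<mu>"
proof -
  have R: "rmeas \<mu>" unfolding rmeas_def rmeas_axioms_def using assms(1,2) by simp
  interpret rmeas \<mu> by (rule R)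
  obtain E0 where E0: "0 \<le> E0" "E_Lambda_star \<mu> = ereal E0"
    and appr: "\<And>e. 0 < e \<Longrightarrow> \<exists>m. E0 - e < (\<integral>v. LL qq m v \<partial>\<mu>)"
    using E_repr by blast
  show ?thesis
  proof (cases "E0 = 0")
    case True
    show ?thesis
    proof (intro exI[of _ 1] exI[of _ "1::nat"] conjI allI impI)
      fix n :: nat assume n1: "1 \<le> n"
      have "ereal 0 \<le> rho1 \<mu> n \<delta>"
      proof (rule rho1_ge)
        fix N assume "n < N" "real N \<le> exp (0 * real n)"
        then show "EK \<mu> n N \<le> ennreal \<delta>" using n1 by simp
      qed
      then show "ereal (1 - 1 / sqrt (real n)) * E_Lambda_star \<mu> \<le> rho1 \<mu> n \<delta>"
        using E0 True by (simp add: zero_ereal_def)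
    qed simp
  next
    case False
    then have E0p: "0 < E0" using E0 by simp
    define Lg where "Lg = ln (2 / \<delta>)"
    have Lg0: "0 < Lg" unfolding Lg_def using assms(5,6) by simp
    have expLg: "exp (- Lg) = \<delta> / 2" unfolding Lg_def using assms(5) by (simp add: exp_minus)
    define C where "C = 1 + 4 * Vc * Lg"
    have Vc1: "1 \<le> Vc" using e4 unfolding Vc_def by (simp add: field_simps)
    have C1: "1 \<le> C" unfolding C_def using Vc_pos Lg0 by simp
    have CLg: "Lg \<le> C" unfolding C_def using Vc1 Lg0 by (smt (verit) mult_le_cancel_right1)
    have CC: "4 * Vc * Lg \<le> C^2"
    proof -
      have "4 * Vc * Lg \<le> C" unfolding C_def by simp
      also have "C \<le> C^2" using C1 by (simp add: power2_eq_square)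
      finally show ?thesis .
    qed
    define c where "c = (2 * C + 1) / E0"
    have c0: "0 < c" unfolding c_def using E0p C1 by simp
    show ?thesis
    proof (intro exI[of _ c] exI[of _ "1::nat"] conjI allI impI c0)
      fix n :: nat assume n1: "1 \<le> n"
      define sn where "sn = sqrt (real n)"
      have sn1: "1 \<le> sn" unfolding sn_def using n1 by simp
      have sn2: "sn^2 = real n" unfolding sn_def by simp
      obtain m where m: "E0 - 1 / sn < (\<integral>v. LL qq m v \<partial>\<mu>)"
        using appr[of "1 / sn"] sn1 by auto
      define m0 where "m0 = (\<integral>v. LL qq m v \<partial>\<mu>)"
      define r where "r = m0 - 2 * C / sn"
      define a' where "a' = m0 - C / sn"
      define l where "l = C / (2 * Vc * sn)"
      have l0: "0 \<le> l" unfolding l_def using C1 Vc_pos sn1 by simp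
      have key: "real n * (l * (a' - m0) + l^2 * Vc) = - (C^2 / (4 * Vc))"
        using Vc_pos sn1 unfolding l_def a'_def sn2[symmetric]
        by (simp add: field_simps power2_eq_square)
      have bound1: "emeasure (mu_n \<mu> n) {y \<in> space (mu_n \<mu> n). (\<Sum>j<n. LL qq m (y j)) \<le> a' * real n}
          \<le> ennreal (\<delta> / 2)"
      proof -
        have "emeasure (mu_n \<mu> n) {y \<in> space (mu_n \<mu> n). (\<Sum>j<n. LL qq m (y j)) \<le> a' * real n}
            \<le> ennreal (exp (l * (a' * real n)) * exp (- (l * m0) + l^2 * Vc) ^ n)"
          unfolding m0_def by (rule lowertail[OF l0])
        also have "exp (l * (a' * real n)) * exp (- (l * m0) + l^2 * Vc) ^ n
            = exp (real n * (l * (a' - m0) + l^2 * Vc))"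
          by (simp add: exp_of_nat_mult[symmetric] exp_add[symmetric] algebra_simps)
        also have "\<dots> = exp (- (C^2 / (4 * Vc)))" by (simp add: key)
        also have "\<dots> \<le> exp (- Lg)"
          using CC Vc_pos by (simp add: field_simps)
        also have "\<dots> = \<delta> / 2" by (rule expLg)
        finally show ?thesis by (simp add: ennreal_leI)
      qed
      have "ereal r \<le> rho1 \<mu> n \<delta>"
      proof (rule rho1_ge)
        fix N assume nN: "n < N" and Nle: "real N \<le> exp (r * real n)"
        have "real N * exp (- (a' * real n)) \<le> exp (r * real n) * exp (- (a' * real n))"
          using Nle by (intro mult_right_mono) simp_all
        also have "\<dots> = exp (- (C * sn))"
        proof -
          have "r * real n - a' * real n = - (C * sn)"
            unfolding r_def a'_def sn2[symmetric] using sn1 by (simp add: field_simps power2_eq_square)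
          then show ?thesis by (simp add: exp_add[symmetric])
        qed
        also have "\<dots> \<le> exp (- Lg)"
        proof -
          have "Lg \<le> C * sn" using CLg sn1 C1 by (smt (verit) mult_le_cancel_left1)
          then show ?thesis by simp
        qed
        also have "\<dots> = \<delta> / 2" by (rule expLg)
        finally have b2: "real N * exp (- (a' * real n)) \<le> \<delta> / 2" .
        have "EK \<mu> n N \<le> emeasure (mu_n \<mu> n) {y \<in> space (mu_n \<mu> n). (\<Sum>j<n. LL qq m (y j)) \<le> a' * real n}
            + of_nat N * ennreal (exp (- (a' * real n)))"
          by (rule EK_bound)
        also have "\<dots> \<le> ennreal (\<delta> / 2) + ennreal (\<delta> / 2)"
        proof (intro add_mono bound1)
          have "of_nat N * ennreal (exp (- (a' * real n))) = ennreal (real N * exp (- (a' * real n)))"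
            by (simp add: ennreal_mult ennreal_of_nat_eq_real_of_nat)
          also have "\<dots> \<le> ennreal (\<delta> / 2)" using b2 by (rule ennreal_leI)
          finally show "of_nat N * ennreal (exp (- (a' * real n))) \<le> ennreal (\<delta> / 2)" .
        qed
        also have "\<dots> = ennreal \<delta>" using assms(5) by (simp flip: ennreal_plus)
        finally show "EK \<mu> n N \<le> ennreal \<delta>" .
      qed
      moreover have "(1 - c / sqrt (real n)) * E0 \<le> r"
      proof -
        have "(1 - c / sqrt (real n)) * E0 = E0 - (2 * C + 1) / sn"
        proof -
          have "0 < sqrt (real n)" using n1 by simp
          then show ?thesis unfolding c_def sn_def using E0p by (simp add: field_simps)
        qed
        also have "\<dots> \<le> r"
        proof -
          have h: "(2 * C + 1) / sn = 2 * C / sn + 1 / sn" by (simp add: add_divide_distrib)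
          show ?thesis unfolding r_def using m m0_def h by linarith
        qed
        finally show ?thesis .
      qed
      ultimately have "ereal ((1 - c / sqrt (real n)) * E0) \<le> rho1 \<mu> n \<delta>"
        by (meson ereal_less_eq(3) order_trans)
      then show "ereal (1 - c / sqrt (real n)) * E_Lambda_star \<mu> \<le> rho1 \<mu> n \<delta>"
        using E0 by simp
    qed
  qed
qed

end
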